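(* Let $w$ be a word and let $v_x, v_y$ be vertices of the graph $G(w)$ with $\mathrm{dist}(v_x, v_y) = d$ in $G(w)$. Then $|\pi_{\{x\}}(w)| - d \le |\pi_{\{y\}}(w)| \le |\pi_{\{x\}}(w)| + d$.
   Context: For a set of symbols $\mathcal S$, $\pi_{\mathcal S}(w)$ is the subsequence of $w$ consisting of all occurrences of symbols in $\mathcal S$; $|\pi_{\{x\}}(w)|$ is the number of occurrences of $x$ in $w$. Symbols $x,y$ alternate in $w$ if $\pi_{\{x,y\}}(w) \in \{(xy)^k, (xy)^kx, (yx)^k, (yx)^ky : k \ge 0\}$. $G(w)$ has one vertex $v_a$ per symbol $a$ of the alphabet and undirected edge $(v_x,v_y)$ iff $x \neq y$ alternate in $w$; $\mathrm{dist}$ is the shortest-path distance in $G(w)$. *)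

theory Defs
  imports Main "HOL-Library.Extended_Nat"
begin

definition proj :: "'a set \<Rightarrow> 'a list \<Rightarrow> 'a list" where
  "proj S w = filter (\<lambda>c. c \<in> S) w"

definition alternate :: "'a list \<Rightarrow> 'a \<Rightarrow> 'a \<Rightarrow> bool" where
  "alternate w x y \<longleftrightarrow> (\<exists>k. proj {x, y} w = concat (replicate k [x, y])
      \<or> proj {x, y} w = concat (replicate k [x, y]) @ [x]
      \<or> proj {x, y} w = concat (replicate k [y, x])
      \<or> proj {x, y} w = concat (replicate k [y, x]) @ [y])"

definition gedge :: "'a list \<Rightarrow> 'a \<Rightarrow> 'a \<Rightarrow> bool" where
  "gedge w x y \<longleftrightarrow> x \<noteq> y \<and> alternate w x y"

definition walk_len :: "'a set \<Rightarrow> 'a list \<Rightarrow> 'a \<Rightarrow> 'a \<Rightarrow> nat \<Rightarrow> bool" where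
  "walk_len A w x y n \<longleftrightarrow> (\<exists>ps. length ps = Suc n \<and> hd ps = x \<and> last ps = y \<and> set ps \<subseteq> A
      \<and> (\<forall>i<n. gedge w (ps ! i) (ps ! Suc i)))"

definition gdist :: "'a set \<Rightarrow> 'a list \<Rightarrow> 'a \<Rightarrow> 'a \<Rightarrow> enat" where
  "gdist A w x y = (if \<exists>n. walk_len A w x y n then enat (LEAST n. walk_len A w x y n) else \<infinity>)"

end

theory Submission
  imports Defs
begin

lemma cnt_rep:
  assumes "x \<noteq> y"
  shows "length (filter (\<lambda>c. c = x) (concat (replicate k [x, y]))) = k"
    and "length (filter (\<lambda>c. c = y) (concat (replicate k [x, y]))) = k"
  using assms by (induction k) auto

lemma proj_cnt: "x \<in> S \<Longrightarrow> length (filter (\<lambda>c. c = x) (proj S w)) = length (proj {x} w)"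
  unfolding proj_def by (induction w) auto

lemma alt_diff:
  assumes "gedge w x y"
  shows "\<bar>int (length (proj {x} w)) - int (length (proj {y} w))\<bar> \<le> 1"
proof -
  have ne: "x \<noteq> y" and "alternate w x y" using assms unfolding gedge_def by auto
  then obtain k where k: "proj {x, y} w = concat (replicate k [x, y])
      \<or> proj {x, y} w = concat (replicate k [x, y]) @ [x]
      \<or> proj {x, y} w = concat (replicate k [y, x])
      \<or> proj {x, y} w = concat (replicate k [y, x]) @ [y]"
    unfolding alternate_def by blast
  have hx: "length (proj {x} w) = length (filter (\<lambda>c. c = x) (proj {x,y} w))"
    by (simp add: proj_cnt)
  have hy: "length (proj {y} w) = length (filter (\<lambda>c. c = y) (proj {x,y} w))"
    by (simp add: proj_cnt)
  from k show ?thesis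
    unfolding hx hy using cnt_rep[OF ne, of k] cnt_rep[OF ne[symmetric], of k] ne by auto
qed

lemma walk_diff:
  "length ps = Suc n \<Longrightarrow> (\<forall>i<n. gedge w (ps ! i) (ps ! Suc i)) \<Longrightarrow>
   \<bar>int (length (proj {hd ps} w)) - int (length (proj {last ps} w))\<bar> \<le> int n"
proof (induction n arbitrary: ps)
  case 0
  then obtain a where "ps = [a]" by (cases ps) auto
  then show ?case by simp
next
  case (Suc n)
  then obtain a qs where ps: "ps = a # qs" by (cases ps) auto
  with Suc.prems have lq: "length qs = Suc n" by simp
  then obtain b qs' where qs: "qs = b # qs'" by (cases qs) auto
  have "\<forall>i<n. gedge w (qs ! i) (qs ! Suc i)"
  proof (intro allI impI)
    fix i assume "i < n"
    then have "gedge w (ps ! Suc i) (ps ! Suc (Suc i))" using Suc.prems(2) by simp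
    then show "gedge w (qs ! i) (qs ! Suc i)" using ps by simp
  qed
  from Suc.IH[OF lq this] have ih: "\<bar>int (length (proj {b} w)) - int (length (proj {last qs} w))\<bar> \<le> int n"
    using qs by simp
  have "gedge w (ps ! 0) (ps ! 1)" using Suc.prems(2) by simp
  then have "gedge w a b" using ps qs by simp
  from alt_diff[OF this] ih show ?case using ps qs by simp
qed

theorem lemma6:
  fixes A :: "'a set" and w :: "'a list" and x y :: 'a and d :: nat
  assumes "set w \<subseteq> A" and "x \<in> A" and "y \<in> A"
    and "gdist A w x y = enat d"
  shows "int (length (proj {x} w)) - int d \<le> int (length (proj {y} w))
    \<and> int (length (proj {y} w)) \<le> int (length (proj {x} w)) + int d"
proof -
  have ex: "\<exists>n. walk_len A w x y n"
    using assms(4) unfolding gdist_def by (auto split: if_splits)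
  then have "walk_len A w x y d"
    using assms(4) unfolding gdist_def by (metis LeastI_ex enat.inject)
  then obtain ps where "length ps = Suc d" "hd ps = x" "last ps = y"
      "\<forall>i<d. gedge w (ps ! i) (ps ! Suc i)"
    unfolding walk_len_def by blast
  from walk_diff[OF this(1,4)] this(2,3) show ?thesis by auto
qed

end
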